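(* Consider the $n$-body problem in ${\bf H}^2$ with all masses equal to $m>0$, $n\ge2$, and let $\alpha_i=2\pi i/n$. For every $m>0$ and every $z>1$ there exist $\omega>0$ and $\omega<0$ such that ${\bf q}_i(t)=(\rho\cos(\omega t+\alpha_i),\rho\sin(\omega t+\alpha_i), z)$, $\rho=(z^2-1)^{1/2}$, $i=1,\dots,n$, is a solution of the equations of motion (an elliptic relative equilibrium in which the regular $n$-gon rotates in the plane $z=$ constant).
   Context: The $n$-body problem in ${\bf H}^2$ (Weierstrass model): with the Lorentz inner product ${\bf a}\boxdot{\bf b}=a_xb_x+a_yb_y-a_zb_z$ on $\mathbb R^3$, ${\bf H}^2=\{(x,y,z): x^2+y^2-z^2=-1,\ z>0\}$. Bodies of masses $m_1,\dots,m_n>0$ have positions ${\bf q}_i=(x_i,y_i,z_i)\in{\bf H}^2$ and satisfy $$\ddot{\bf q}_i=\sum_{j\ne i}\frac{m_j[{\bf q}_j+({\bf q}_i\boxdot{\bf q}_j){\bf q}_i]}{[({\bf q}_i\boxdot{\bf q}_j)^2-1]^{3/2}}+(\dot{\bf q}_i\boxdot\dot{\bf q}_i){\bf q}_i,\qquad {\bf q}_i\boxdot{\bf q}_i=-1,\ \ {\bf q}_i\boxdot\dot{\bf q}_i=0,$$ $i=1,\dots,n$, defined only for collisionless configurations (${\bf q}_i\ne{\bf q}_j$ for $i\ne j$). *)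

theory Defs
  imports "HOL-Analysis.Analysis"
begin

type_synonym vec3 = "real \<times> real \<times> real"

fun lor :: "vec3 \<Rightarrow> vec3 \<Rightarrow> real" where
  "lor (a1, a2, a3) (b1, b2, b3) = a1 * b1 + a2 * b2 - a3 * b3"

text \<open>Bodies are indexed by 1..n; q i t is the position of body i at time t.
  A solution (defined for all real times) of the n-body problem in H^2
  with masses mass 1, ..., mass n.\<close>
definition is_solution ::
  "nat \<Rightarrow> (nat \<Rightarrow> real) \<Rightarrow> (nat \<Rightarrow> real \<Rightarrow> vec3) \<Rightarrow> bool" where
  "is_solution n mass q \<longleftrightarrow>
     (\<exists>q' q'' :: nat \<Rightarrow> real \<Rightarrow> vec3. \<forall>t. \<forall>i\<in>{1..n}.
        (q i has_vector_derivative q' i t) (at t) \<and>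
        (q' i has_vector_derivative q'' i t) (at t) \<and>
        lor (q i t) (q i t) = -1 \<and> snd (snd (q i t)) > 0 \<and>
        lor (q i t) (q' i t) = 0 \<and>
        (\<forall>j\<in>{1..n}. j \<noteq> i \<longrightarrow> q j t \<noteq> q i t) \<and>
        q'' i t =
          (\<Sum>j\<in>{1..n} - {i}.
             (mass j / (((lor (q i t) (q j t))\<^sup>2 - 1) powr (3/2))) *\<^sub>R
               (q j t + lor (q i t) (q j t) *\<^sub>R q i t))
          + lor (q' i t) (q' i t) *\<^sub>R q i t)"

end

theory Submission imports Defs begin

lemma vd3:
  assumes "(f has_real_derivative a) (at t)" "(g has_real_derivative b) (at t)"
    "(h has_real_derivative c) (at t)"
  shows "((\<lambda>t. (f t, g t, h t)) has_vector_derivative (a, b, c)) (at t)"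
proof -
  have "((\<lambda>t. (f t, g t, h t)) has_derivative (\<lambda>x. (a * x, b * x, c * x))) (at t)"
    using assms unfolding has_field_derivative_def
    by (intro has_derivative_Pair) auto
  moreover have "(\<lambda>x. (a * x, b * x, c * x)) = (\<lambda>x::real. x *\<^sub>R (a, b, c))"
    by (auto simp: fun_eq_iff)
  ultimately show ?thesis unfolding has_vector_derivative_def by simp
qed

lemma reindex_shift:
  fixes g :: "real \<Rightarrow> real" and n i :: nat
  assumes per: "\<And>x. g (x + 2*pi) = g x" and i: "i \<in> {1..n}"
  shows "(\<Sum>j\<in>{1..n} - {i}. g (2*pi*(real j - real i)/real n)) = (\<Sum>k\<in>{1..n-1}. g (2*pi*real k/real n))"
proof (rule sum.reindex_bij_witness[where i="\<lambda>k. if k + i \<le> n then k + i else k + i - n"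
      and j="\<lambda>j. if j > i then j - i else j + n - i"])
  fix j assume j: "j \<in> {1..n} - {i}"
  show "(if j > i then j - i else j + n - i) \<in> {1..n - 1}" using j i by auto
  show "(if (if j > i then j - i else j + n - i) + i \<le> n then (if j > i then j - i else j + n - i) + i
        else (if j > i then j - i else j + n - i) + i - n) = j" using j i by auto
  show "g (2*pi*real (if j > i then j - i else j + n - i)/real n) = g (2*pi*(real j - real i)/real n)"
  proof (cases "j > i")
    case True then show ?thesis by (simp add: of_nat_diff)
  next
    case False
    have n0: "real n > 0" using i by auto
    have "2*pi*real (j + n - i)/real n = 2*pi*(real j - real i)/real n + 2*pi"
      using False i n0 by (simp add: of_nat_diff field_simps)
    then show ?thesis using False per by simp
  qed
next
  fix k assume k: "k \<in> {1..n-1}"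
  show "(if k + i \<le> n then k + i else k + i - n) \<in> {1..n} - {i}" using k i by auto
  show "(if (if k + i \<le> n then k + i else k + i - n) > i then (if k + i \<le> n then k + i else k + i - n) - i
      else (if k + i \<le> n then k + i else k + i - n) + n - i) = k" using k i by auto
qed

lemma odd_sum_zero:
  fixes h :: "real \<Rightarrow> real" and n :: nat
  assumes per: "\<And>x. h (x + 2*pi) = h x" and odd: "\<And>x. h (-x) = - h x"
  shows "(\<Sum>k\<in>{1..n-1}. h (2*pi*real k/real n)) = 0"
proof -
  have "(\<Sum>k\<in>{1..n-1}. h (2*pi*real k/real n)) = (\<Sum>k\<in>{1..n-1}. h (2*pi*real (n - k)/real n))"
    by (rule sum.reindex_bij_witness[where i="\<lambda>k. n - k" and j="\<lambda>k. n - k"]) auto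
  also have "\<dots> = (\<Sum>k\<in>{1..n-1}. - h (2*pi*real k/real n))"
  proof (rule sum.cong)
    fix k assume k: "k \<in> {1..n-1}"
    then have n0: "real n > 0" by auto
    have kn: "k \<le> n" using k by auto
    have "2*pi*real (n - k)/real n = - (2*pi*real k/real n) + 2*pi"
      using kn n0 by (simp add: of_nat_diff field_simps)
    then show "h (2*pi*real (n - k)/real n) = - h (2*pi*real k/real n)" using per[of "- (2*pi*real k/real n)"] odd by simp
  qed simp
  finally show ?thesis by (simp add: sum_negf)
qed

lemma cos_lt1:
  fixes n :: nat and j i :: nat
  assumes "i \<in> {1..n}" "j \<in> {1..n}" "j \<noteq> i"
  shows "cos (2*pi*(real j - real i)/real n) < 1"
proof -
  have "cos (2*pi*(real j - real i)/real n) \<noteq> 1"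
  proof
    assume "cos (2*pi*(real j - real i)/real n) = 1"
    then obtain k :: int where k: "2*pi*(real j - real i)/real n = k * 2 * pi"
      by (auto simp: cos_one_2pi_int)
    have n0: "real n > 0" using assms by auto
    have "2*pi*(real j - real i) = 2*pi*(real_of_int k * real n)" using k n0 by (simp add: field_simps)
    then have "real j - real i = real_of_int k * real n" using pi_gt_zero by simp
    then have e: "int j - int i = k * int n" by (metis of_int_eq_iff of_int_mult of_int_of_nat_eq of_int_diff)
    have lt: "\<bar>int j - int i\<bar> < int n" "int j \<noteq> int i" using assms by auto
    have "\<bar>k\<bar> * int n < 1 * int n" using e lt by (simp add: abs_mult)
    then have "\<bar>k\<bar> < 1" using mult_less_cancel_right[of "\<bar>k\<bar>" "int n" 1] by linarith
    then have "k = 0" by simp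
    then show False using e lt by simp
  qed
  then show ?thesis using cos_le_one[of "2*pi*(real j - real i)/real n"] by linarith
qed

definition Dd :: "real \<Rightarrow> real \<Rightarrow> real" where
  "Dd z x = (((z\<^sup>2 - 1) * cos x - z\<^sup>2)\<^sup>2 - 1) powr (3/2)"

definition KK :: "nat \<Rightarrow> real \<Rightarrow> real" where
  "KK n z = (\<Sum>k\<in>{1..n-1}. (1 - cos (2*pi*real k/real n)) / Dd z (2*pi*real k/real n))"

lemma sum_triple: "(\<Sum>j\<in>A. (f j, g j, h j)) = (sum f A, sum g A, sum h A)"
  by (simp add: fst_sum snd_sum prod_eq_iff)

lemma comp_id:
  fixes \<rho> z m D cs sn C S :: real
  assumes "\<rho>\<^sup>2 = z\<^sup>2 - 1"
  shows "(m / D) *\<^sub>R ((\<rho> * (cs * C - sn * S), \<rho> * (sn * C + cs * S), z) + (\<rho>\<^sup>2 * C - z\<^sup>2) *\<^sub>R (\<rho> * cs, \<rho> * sn, z)) =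
    (cs * (-m * \<rho> * z\<^sup>2) * ((1-C)/D) - sn * (\<rho> * m) * (S/D), sn * (-m * \<rho> * z\<^sup>2) * ((1-C)/D) + cs * (\<rho> * m) * (S/D), -m * z * \<rho>\<^sup>2 * ((1-C)/D))"
proof -
  have z2: "z\<^sup>2 = \<rho>\<^sup>2 + 1" using assms by simp
  show ?thesis unfolding divide_inverse z2 by (simp add: algebra_simps power2_eq_square)
qed

lemma sol:
  fixes n :: nat and m z \<rho> \<omega> :: real
  assumes n2: "n \<ge> 2" and z: "z > 1" and rho: "\<rho>\<^sup>2 = z\<^sup>2 - 1" "\<rho> > 0"
    and om: "\<omega>\<^sup>2 = m * KK n z"
  shows "is_solution n (\<lambda>_. m) (\<lambda>i t. (\<rho> * cos (\<omega> * t + 2 * pi * real i / real n),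
                     \<rho> * sin (\<omega> * t + 2 * pi * real i / real n), z))"
proof -
  let ?th = "\<lambda>i t. \<omega> * t + 2 * pi * real i / real n"
  let ?q = "\<lambda>i t. (\<rho> * cos (?th i t), \<rho> * sin (?th i t), z)"
  define q1 where "q1 = (\<lambda>i t. (- \<rho> * \<omega> * sin (?th i t), \<rho> * \<omega> * cos (?th i t), 0::real))"
  define q2 where "q2 = (\<lambda>i t. (- \<rho> * \<omega>\<^sup>2 * cos (?th i t), - \<rho> * \<omega>\<^sup>2 * sin (?th i t), 0::real))"
  have n0: "real n > 0" using n2 by auto
  have Dd: "Dd z x = ((\<rho>\<^sup>2 * cos x - z\<^sup>2)\<^sup>2 - 1) powr (3/2)" for x using rho by (simp add: Dd_def)
  have thd: "?th j t = ?th i t + 2 * pi * (real j - real i) / real n" for i j t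
    using n0 by (simp add: field_simps)
  have lorij: "lor (?q i t) (?q j t) = \<rho>\<^sup>2 * cos (2 * pi * (real j - real i) / real n) - z\<^sup>2" for i j t
  proof -
    have "?th j t - ?th i t = 2 * pi * (real j - real i) / real n" using thd[where i=i and j=j and t=t] by simp
    then have "cos (2 * pi * (real j - real i) / real n) = cos (?th j t) * cos (?th i t) + sin (?th j t) * sin (?th i t)"
      by (metis cos_diff)
    then show ?thesis by (simp add: power2_eq_square algebra_simps)
  qed
  have Lless: "\<rho>\<^sup>2 * cos d - z\<^sup>2 < -1" if "cos d < 1" for d
  proof -
    have "\<rho>\<^sup>2 > 0" using rho(2) by simp
    then have "\<rho>\<^sup>2 * (1 - cos d) > 0" using that by (simp del: zero_less_power2)
    moreover have "\<rho>\<^sup>2 * cos d - z\<^sup>2 = -1 - \<rho>\<^sup>2 * (1 - cos d)" using rho(1) by (simp add: algebra_simps)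
    ultimately show ?thesis by linarith
  qed
  have Dpos: "Dd z d > 0" if "cos d < 1" for d
  proof -
    have "\<rho>\<^sup>2 * cos d - z\<^sup>2 < -1" using Lless that by blast
    then have "((\<rho>\<^sup>2 * cos d - z\<^sup>2) - 1) * ((\<rho>\<^sup>2 * cos d - z\<^sup>2) + 1) > 0"
      by (intro mult_neg_neg) auto
    then have "(\<rho>\<^sup>2 * cos d - z\<^sup>2)\<^sup>2 > 1"
      by (simp add: power2_eq_square algebra_simps)
    then show ?thesis unfolding Dd by simp
  qed
  have Dper: "Dd z (x + 2 * pi) = Dd z x" for x by (simp add: Dd_def)
  have Dodd: "Dd z (- x) = Dd z x" for x by (simp add: Dd_def)
  show ?thesis
    unfolding is_solution_def
  proof (rule exI[of _ q1], rule exI[of _ q2], intro allI ballI conjI)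
    fix t and i :: nat assume i: "i \<in> {1..n}"
    show "(?q i has_vector_derivative q1 i t) (at t)"
      unfolding q1_def by (rule vd3) (auto intro!: derivative_eq_intros)
    show "(q1 i has_vector_derivative q2 i t) (at t)"
      unfolding q1_def q2_def by (rule vd3) (auto intro!: derivative_eq_intros simp: power2_eq_square)
    show "lor (?q i t) (?q i t) = -1" using lorij[where i=i and j=i and t=t] rho by simp
    show "snd (snd (?q i t)) > 0" using z by simp
    show "lor (?q i t) (q1 i t) = 0" unfolding q1_def by (simp add: algebra_simps)
    {
      fix j assume j1: "j \<in> {1..n}"
      show "j \<noteq> i \<longrightarrow> ?q j t \<noteq> ?q i t"
      proof (intro impI notI)
      assume j2: "j \<noteq> i" and eq: "?q j t = ?q i t"
      note j = j1 j2
      have "cos (2 * pi * (real j - real i) / real n) < 1" using cos_lt1 i j by blast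
      then have "lor (?q i t) (?q j t) < -1" using lorij Lless by simp
      moreover have "lor (?q i t) (?q j t) = -1" unfolding eq using lorij[where i=i and j=i and t=t] rho by simp
      ultimately show False by simp
      qed
    }
    define cs where "cs = cos (?th i t)"
    define sn where "sn = sin (?th i t)"
    define dl where "dl = (\<lambda>j::nat. 2 * pi * (real j - real i) / real n)"
    define A where "A = (\<lambda>j. (1 - cos (dl j)) / Dd z (dl j))"
    define B where "B = (\<lambda>j. sin (dl j) / Dd z (dl j))"
    have sumeq: "(\<Sum>j\<in>{1..n} - {i}. (m / (((lor (?q i t) (?q j t))\<^sup>2 - 1) powr (3/2))) *\<^sub>R
               (?q j t + lor (?q i t) (?q j t) *\<^sub>R ?q i t)) =
       (\<Sum>j\<in>{1..n} - {i}. (cs * (-m * \<rho> * z\<^sup>2) * A j - sn * (\<rho> * m) * B j,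
            sn * (-m * \<rho> * z\<^sup>2) * A j + cs * (\<rho> * m) * B j, -m * z * \<rho>\<^sup>2 * A j))"
    proof (rule sum.cong[OF refl])
      fix j assume j: "j \<in> {1..n} - {i}"
      have qj: "?q j t = (\<rho> * (cs * cos (dl j) - sn * sin (dl j)), \<rho> * (sn * cos (dl j) + cs * sin (dl j)), z)"
        unfolding cs_def sn_def dl_def thd[where i=i and j=j and t=t] by (simp add: cos_add sin_add)
      have qi: "?q i t = (\<rho> * cs, \<rho> * sn, z)" unfolding cs_def sn_def by simp
        have dlj: "2 * pi * (real j - real i) / real n = dl j" by (simp add: dl_def)
        show "(m / (((lor (?q i t) (?q j t))\<^sup>2 - 1) powr (3/2))) *\<^sub>R
               (?q j t + lor (?q i t) (?q j t) *\<^sub>R ?q i t) =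
            (cs * (-m * \<rho> * z\<^sup>2) * A j - sn * (\<rho> * m) * B j,
            sn * (-m * \<rho> * z\<^sup>2) * A j + cs * (\<rho> * m) * B j, -m * z * \<rho>\<^sup>2 * A j)"
        unfolding lorij A_def B_def Dd[symmetric] dlj
        unfolding qj qi by (rule comp_id[OF rho(1)])
    qed
    have SA: "(\<Sum>j\<in>{1..n} - {i}. A j) = KK n z"
      unfolding A_def dl_def KK_def
      by (rule reindex_shift[OF _ i, where g="\<lambda>x. (1 - cos x) / Dd z x"]) (simp add: Dper)
    have SB: "(\<Sum>j\<in>{1..n} - {i}. B j) = 0"
    proof -
      have "(\<Sum>j\<in>{1..n} - {i}. B j) = (\<Sum>k\<in>{1..n-1}. sin (2*pi*real k/real n) / Dd z (2*pi*real k/real n))"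
        unfolding B_def dl_def
        by (rule reindex_shift[OF _ i, where g="\<lambda>x. sin x / Dd z x"]) (simp add: Dper)
      also have "\<dots> = 0"
        by (rule odd_sum_zero[where h="\<lambda>x. sin x / Dd z x"]) (simp_all add: Dper Dodd)
      finally show ?thesis .
    qed
    have l11: "lor (q1 i t) (q1 i t) = \<rho>\<^sup>2 * \<omega>\<^sup>2"
    proof -
      have gen: "lor (- r * w * S, r * w * C, 0) (- r * w * S, r * w * C, 0) = r\<^sup>2 * w\<^sup>2 * (S\<^sup>2 + C\<^sup>2)" for r w S C :: real
        by (simp add: power2_eq_square algebra_simps)
      have "lor (q1 i t) (q1 i t) = \<rho>\<^sup>2 * \<omega>\<^sup>2 * ((sin (?th i t))\<^sup>2 + (cos (?th i t))\<^sup>2)"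
        unfolding q1_def by (rule gen)
      then show ?thesis by simp
    qed
    have z2: "z\<^sup>2 = \<rho>\<^sup>2 + 1" using rho by simp
    show "q2 i t = (\<Sum>j\<in>{1..n} - {i}. (m / (((lor (?q i t) (?q j t))\<^sup>2 - 1) powr (3/2))) *\<^sub>R
               (?q j t + lor (?q i t) (?q j t) *\<^sub>R ?q i t)) + lor (q1 i t) (q1 i t) *\<^sub>R ?q i t"
      unfolding sumeq sum_triple l11
    proof -
      let ?S = "{1..n} - {i}"
      have e1: "(\<Sum>j\<in>?S. cs * (-m * \<rho> * z\<^sup>2) * A j - sn * (\<rho> * m) * B j) = cs * (-m * \<rho> * z\<^sup>2) * KK n z"
        by (simp only: sum_subtractf sum_distrib_left[symmetric] SA SB mult_zero_right diff_zero)
      have e2: "(\<Sum>j\<in>?S. sn * (-m * \<rho> * z\<^sup>2) * A j + cs * (\<rho> * m) * B j) = sn * (-m * \<rho> * z\<^sup>2) * KK n z"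
        by (simp only: sum.distrib sum_distrib_left[symmetric] SA SB mult_zero_right add_0_right)
      have e3: "(\<Sum>j\<in>?S. -m * z * \<rho>\<^sup>2 * A j) = -m * z * \<rho>\<^sup>2 * KK n z"
        by (simp only: sum_distrib_left[symmetric] SA)
      have qi: "?q i t = (\<rho> * cs, \<rho> * sn, z)" unfolding cs_def sn_def by simp
      have q2i: "q2 i t = (- \<rho> * (m * KK n z) * cs, - \<rho> * (m * KK n z) * sn, 0)"
        unfolding q2_def cs_def sn_def om by simp
      show "q2 i t = (\<Sum>j\<in>?S. cs * (-m * \<rho> * z\<^sup>2) * A j - sn * (\<rho> * m) * B j,
         \<Sum>j\<in>?S. sn * (-m * \<rho> * z\<^sup>2) * A j + cs * (\<rho> * m) * B j,
         \<Sum>j\<in>?S. -m * z * \<rho>\<^sup>2 * A j) + (\<rho>\<^sup>2 * \<omega>\<^sup>2) *\<^sub>R ?q i t"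
        unfolding e1 e2 e3 unfolding qi q2i unfolding om z2 by (simp add: algebra_simps power2_eq_square)
    qed
  qed
qed

lemma KK_pos:
  fixes n :: nat and z :: real
  assumes n2: "n \<ge> 2" and z: "z > 1"
  shows "KK n z > 0"
  unfolding KK_def
proof (rule sum_pos)
  show "finite {1..n-1}" by simp
  show "{1..n-1} \<noteq> {}" using n2 by auto
  fix k assume k: "k \<in> {1..n-1}"
  have n0: "real n > 0" using n2 by auto
  have "cos (2 * pi * (real k - real n) / real n) < 1" using cos_lt1[of n n k] k n2 by auto
  moreover have "2 * pi * real k / real n = 2 * pi * (real k - real n) / real n + 2 * pi"
    using n0 by (simp add: field_simps)
  ultimately have c: "cos (2 * pi * real k / real n) < 1" by simp
  define x where "x = 2 * pi * real k / real n"
  have c1: "1 - cos x > 0" using c unfolding x_def by simp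
  have r: "z\<^sup>2 - 1 > 0" using z by (simp add: one_less_power)
  have "(z\<^sup>2 - 1) * (1 - cos x) > 0" using r c1 by simp
  moreover have "(z\<^sup>2 - 1) * cos x - z\<^sup>2 = -1 - (z\<^sup>2 - 1) * (1 - cos x)" by (simp add: algebra_simps)
  ultimately have L: "(z\<^sup>2 - 1) * cos x - z\<^sup>2 < -1" by linarith
  then have "(((z\<^sup>2 - 1) * cos x - z\<^sup>2) - 1) * (((z\<^sup>2 - 1) * cos x - z\<^sup>2) + 1) > 0"
    by (intro mult_neg_neg) auto
  then have "((z\<^sup>2 - 1) * cos x - z\<^sup>2)\<^sup>2 > 1"
    by (simp add: power2_eq_square algebra_simps)
  then have D: "Dd z x > 0" unfolding Dd_def by simp
  show "(1 - cos (2 * pi * real k / real n)) / Dd z (2 * pi * real k / real n) > 0"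
    using D c1 unfolding x_def by simp
qed

theorem mainTheorem13:
  fixes n :: nat and m z :: real
  assumes "n \<ge> 2" and "m > 0" and "z > 1"
  shows "(\<exists>\<omega>>0. is_solution n (\<lambda>_. m)
            (\<lambda>i t. (sqrt (z\<^sup>2 - 1) * cos (\<omega> * t + 2 * pi * real i / real n),
                     sqrt (z\<^sup>2 - 1) * sin (\<omega> * t + 2 * pi * real i / real n), z))) \<and>
         (\<exists>\<omega><0. is_solution n (\<lambda>_. m)
            (\<lambda>i t. (sqrt (z\<^sup>2 - 1) * cos (\<omega> * t + 2 * pi * real i / real n),
                     sqrt (z\<^sup>2 - 1) * sin (\<omega> * t + 2 * pi * real i / real n), z)))"
proof -
  have r: "z\<^sup>2 - 1 > 0" using assms(3) by (simp add: one_less_power)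
  have rho: "(sqrt (z\<^sup>2 - 1))\<^sup>2 = z\<^sup>2 - 1" "sqrt (z\<^sup>2 - 1) > 0" using r by simp_all
  have mk: "m * KK n z > 0" using KK_pos[OF assms(1,3)] assms(2) by simp
  define w where "w = sqrt (m * KK n z)"
  have w: "w > 0" "w\<^sup>2 = m * KK n z" "(-w)\<^sup>2 = m * KK n z" using mk unfolding w_def by simp_all
  show ?thesis
  proof
    show "\<exists>\<omega>>0. is_solution n (\<lambda>_. m)
            (\<lambda>i t. (sqrt (z\<^sup>2 - 1) * cos (\<omega> * t + 2 * pi * real i / real n),
                     sqrt (z\<^sup>2 - 1) * sin (\<omega> * t + 2 * pi * real i / real n), z))"
      using w(1) sol[OF assms(1,3) rho w(2)] by blast
    show "\<exists>\<omega><0. is_solution n (\<lambda>_. m)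
            (\<lambda>i t. (sqrt (z\<^sup>2 - 1) * cos (\<omega> * t + 2 * pi * real i / real n),
                     sqrt (z\<^sup>2 - 1) * sin (\<omega> * t + 2 * pi * real i / real n), z))"
      using w(1) sol[OF assms(1,3) rho w(3)] by (intro exI[of _ "-w"]) simp
  qed
qed

end
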